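(* Let $\Sigma$ be finite, $n\ge1$, $\mathbb{X}\subseteq\Sigma^n$, and let $\rho,\sigma$ be $|\mathbb{X}|\times|\mathbb{X}|$ Gram matrices of unit vectors. Then $\mathcal{D}_H(\rho,\sigma)\le\mathrm{Adv}^\star(\rho,\sigma)$.
   Context: $(A\circ B)_{ij}=A_{ij}B_{ij}$; $\|A\|$ is the operator norm, $\|A\|_{\mathrm{tr}}$ the trace norm. Hadamard product distance: $\mathcal{D}_H(\rho,\sigma)=\max_{u:\|u\|=1}\mathcal{D}(\rho\circ uu^*,\sigma\circ uu^* )$, where $\mathcal D(\rho',\sigma')=\frac12\|\rho'-\sigma'\|_{\mathrm{tr}}$ is the trace distance of density matrices. Adversary bound: for $j\in[n]$ let $\Delta_j$ be the $|\mathbb{X}|\times|\mathbb{X}|$ matrix with $(\Delta_j)_{x,y}=1-\delta_{x_j,y_j}$. $\mathrm{Adv}^\star(\rho,\sigma)=\max_{\Gamma}\|\Gamma\circ(\rho-\sigma)\|$ over Hermitian $|\mathbb{X}|\times|\mathbb{X}|$ matrices $\Gamma$ with $\|\Gamma\circ\Delta_j\|\le 1$ for all $j\in[n]$. *)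

theory Defs
  imports "Jordan_Normal_Form.Schur_Decomposition" "Jordan_Normal_Form.Char_Poly"
    "HOL-Computational_Algebra.Fundamental_Theorem_Algebra"
begin

definition vnorm :: "complex vec \<Rightarrow> real" where
  "vnorm v = sqrt (\<Sum>i<dim_vec v. (cmod (v $ i))\<^sup>2)"

definition op_norm :: "complex mat \<Rightarrow> real" where
  "op_norm A = Sup {vnorm (A *\<^sub>v v) | v. v \<in> carrier_vec (dim_col A) \<and> vnorm v = 1}"

(* trace norm: sum of the singular values (with multiplicity), i.e. the square roots
   of the eigenvalues of A^* A, taken as roots of its characteristic polynomial *)
definition trace_norm :: "complex mat \<Rightarrow> real" where
  "trace_norm A = (\<Sum>e\<in># proots (char_poly (mat_adjoint A * A)). sqrt (Re e))"

definition hadamard :: "complex mat \<Rightarrow> complex mat \<Rightarrow> complex mat" where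
  "hadamard A B = mat (dim_row A) (dim_col A) (\<lambda>(i,j). A $$ (i,j) * B $$ (i,j))"

definition outer_self :: "complex vec \<Rightarrow> complex mat" where
  "outer_self u = mat (dim_vec u) (dim_vec u) (\<lambda>(i,j). u $ i * cnj (u $ j))"

definition trace_dist :: "complex mat \<Rightarrow> complex mat \<Rightarrow> real" where
  "trace_dist A B = trace_norm (A - B) / 2"

definition hadamard_dist :: "complex mat \<Rightarrow> complex mat \<Rightarrow> real" where
  "hadamard_dist \<rho> \<sigma> = Sup {trace_dist (hadamard \<rho> (outer_self u)) (hadamard \<sigma> (outer_self u)) | u.
      u \<in> carrier_vec (dim_row \<rho>) \<and> vnorm u = 1}"

definition gram_unit :: "complex mat \<Rightarrow> bool" where
  "gram_unit \<rho> \<longleftrightarrow> (\<exists>d vs. length vs = dim_row \<rho> \<and> dim_col \<rho> = dim_row \<rho> \<and>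
      (\<forall>v\<in>set vs. v \<in> carrier_vec d \<and> vnorm v = 1) \<and>
      \<rho> = mat (length vs) (length vs) (\<lambda>(i,j). (vs ! j) \<bullet>c (vs ! i)))"

(* Delta_j, rows/columns indexed by the enumeration xs of X:
   (Delta_j)_{x,y} = 1 - delta_{x_j,y_j}  (positions j are 0-based) *)
definition Delta :: "'a list list \<Rightarrow> nat \<Rightarrow> complex mat" where
  "Delta xs j = mat (length xs) (length xs)
     (\<lambda>(i,k). if xs ! i ! j = xs ! k ! j then 0 else 1)"

definition adv_star :: "'a list list \<Rightarrow> nat \<Rightarrow> complex mat \<Rightarrow> complex mat \<Rightarrow> real" where
  "adv_star xs n \<rho> \<sigma> = Sup {op_norm (hadamard \<Gamma> (\<rho> - \<sigma>)) | \<Gamma>.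
      \<Gamma> \<in> carrier_mat (length xs) (length xs) \<and> mat_adjoint \<Gamma> = \<Gamma> \<and>
      (\<forall>j<n. op_norm (hadamard \<Gamma> (Delta xs j)) \<le> 1)}"

end

theory Submission
  imports Defs "HOL-Analysis.L2_Norm"
begin


definition ON :: "nat \<Rightarrow> complex vec list \<Rightarrow> bool" where
 "ON n ws \<longleftrightarrow> length ws = n \<and> set ws \<subseteq> carrier_vec n \<and>
    (\<forall>i<n. \<forall>j<n. ws!i \<bullet>c ws!j = (if i = j then 1 else 0))"

lemma sprodc_expand: "dim_vec w = dim_vec v \<Longrightarrow> v \<bullet>c w = (\<Sum>i<dim_vec v. v$i * cnj (w$i))"
  by (simp add: scalar_prod_def atLeast0LessThan)

lemma vnorm_sprod: "complex_of_real ((vnorm v)^2) = v \<bullet>c v"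
proof -
  have "(vnorm v)^2 = (\<Sum>i<dim_vec v. (cmod (v $ i))\<^sup>2)"
    unfolding vnorm_def by (simp add: sum_nonneg)
  hence "complex_of_real ((vnorm v)^2) = (\<Sum>i<dim_vec v. complex_of_real ((cmod (v $ i))\<^sup>2))"
    by simp
  also have "\<dots> = (\<Sum>i<dim_vec v. v$i * cnj (v$i))"
    by (rule sum.cong, simp, metis complex_norm_square)
  finally have "complex_of_real ((vnorm v)^2) = (\<Sum>i<dim_vec v. v$i * cnj (v$i))" .
  thus ?thesis by (simp add: sprodc_expand)
qed

lemma vnorm_nonneg: "vnorm v \<ge> 0" unfolding vnorm_def by (simp add: sum_nonneg)

lemma sprodc_smult: "dim_vec w = dim_vec v \<Longrightarrow> (a \<cdot>\<^sub>v v) \<bullet>c (b \<cdot>\<^sub>v w) = a * cnj b * (v \<bullet>c w)"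
  by (simp add: sprodc_expand sum_distrib_left mult_ac)

lemma sprodc_conj: "dim_vec w = dim_vec v \<Longrightarrow> cnj (v \<bullet>c w) = w \<bullet>c v"
  by (simp add: sprodc_expand mult_ac)

lemma unit_completion:
  assumes v: "v \<in> carrier_vec m" and v1: "v \<bullet>c v = 1"
  shows "\<exists>ws. ON m ws \<and> ws!0 = v"
proof -
  have v0: "v \<noteq> 0\<^sub>v m" using v1 by auto
  interpret cof_vec_space m "TYPE(complex)" .
  define b where "b = basis_completion v"
  from basis_completion[OF v v0, folded b_def]
  have span_b: "span (set b) = carrier_vec m" and dist_b: "distinct b" 
    and indep: "\<not> lin_dep (set b)" and b: "set b \<subseteq> carrier_vec m" and hdb: "hd b = v" 
    and len_b: "length b = m" by auto
  have m0: "m \<noteq> 0" using v0 v by auto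
  from hdb len_b m0 obtain vs where bv: "b = v # vs" by (cases b, auto)
  define gs where "gs = gram_schmidt m b"
  from gram_schmidt_result[OF b dist_b indep refl, folded gs_def]
  have gs: "set gs \<subseteq> carrier_vec m" "corthogonal gs" "length gs = m" 
    by (auto simp: len_b)
  from gram_schmidt_hd[OF v, of vs, folded bv] have hdgs: "hd gs = v" unfolding gs_def .
  hence gs0: "gs!0 = v" using gs(3) m0 by (cases gs, auto)
  define c where "c = (\<lambda>w. complex_of_real (1 / sqrt (Re (w \<bullet>c w))))"
  define ws where "ws = map (\<lambda>w. c w \<cdot>\<^sub>v w) gs"
  have gsc: "\<And>i. i < m \<Longrightarrow> gs!i \<in> carrier_vec m" using gs by auto
  have pos: "\<And>i. i < m \<Longrightarrow> gs!i \<bullet>c gs!i = complex_of_real (Re (gs!i \<bullet>c gs!i)) \<and> Re (gs!i \<bullet>c gs!i) > 0"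
  proof -
    fix i assume i: "i < m"
    have ne: "gs!i \<bullet>c gs!i \<noteq> 0" using corthogonalD[OF gs(2)] i gs(3) by auto
    have e: "gs!i \<bullet>c gs!i = complex_of_real ((vnorm (gs!i))^2)" by (rule vnorm_sprod[symmetric])
    show "gs!i \<bullet>c gs!i = complex_of_real (Re (gs!i \<bullet>c gs!i)) \<and> Re (gs!i \<bullet>c gs!i) > 0"
      using ne unfolding e by auto
  qed
  have "ON m ws"
    unfolding ON_def
  proof (intro conjI allI impI)
    show "length ws = m" using gs by (simp add: ws_def)
    show "set ws \<subseteq> carrier_vec m" using gs by (auto simp: ws_def)
    fix i j assume i: "i < m" and j: "j < m"
    have "ws!i \<bullet>c ws!j = c (gs!i) * cnj (c (gs!j)) * (gs!i \<bullet>c gs!j)"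
    proof -
      have "ws!i = c (gs!i) \<cdot>\<^sub>v gs!i" "ws!j = c (gs!j) \<cdot>\<^sub>v gs!j" using i j gs by (auto simp: ws_def)
      thus ?thesis using gsc[OF i] gsc[OF j] by (simp only: sprodc_smult carrier_vecD)
    qed
    also have "\<dots> = (if i = j then 1 else 0)"
    proof (cases "i = j")
      case True
      obtain r where r: "gs!i \<bullet>c gs!i = complex_of_real r" "r > 0" using pos[OF i] by blast
      have cr: "c (gs!i) = complex_of_real (1 / sqrt r)" unfolding c_def r by simp
      have "c (gs!i) * cnj (c (gs!i)) * (gs!i \<bullet>c gs!i) = complex_of_real ((1/sqrt r)*(1/sqrt r)*r)"
      proof -
        have gen: "\<And>a r. complex_of_real a * cnj (complex_of_real a) * complex_of_real r = complex_of_real (a*a*r)" by simp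
        show ?thesis unfolding cr r by (rule gen)
      qed
      also have "(1/sqrt r)*(1/sqrt r)*r = 1" using r(2)
        by (simp add: field_simps real_sqrt_mult_self)
      finally show ?thesis using True by simp
    next
      case False
      then show ?thesis using corthogonalD[OF gs(2)] i j gs(3) by auto
    qed
    finally show "ws!i \<bullet>c ws!j = (if i = j then 1 else 0)" .
  qed
  moreover have "ws!0 = v" unfolding ws_def using gs(3) m0 gs0 v1 by (simp add: c_def)
  ultimately show ?thesis by blast
qed



lemma adj_dim[simp]: "dim_row (mat_adjoint A) = dim_col A" "dim_col (mat_adjoint A) = dim_row A"
  by (simp_all add: mat_adjoint_def mat_of_rows_def)

lemma adj_idx[simp]: "i < dim_col A \<Longrightarrow> j < dim_row A \<Longrightarrow> mat_adjoint A $$ (i,j) = cnj (A $$ (j,i))"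
  by (simp add: mat_adjoint_def mat_of_rows_def)

lemma adj_carrier[simp]: "A \<in> carrier_mat r c \<Longrightarrow> mat_adjoint A \<in> carrier_mat c r"
  unfolding carrier_mat_def by simp

lemma mv_expand: "i < dim_row A \<Longrightarrow> dim_vec v = dim_col A \<Longrightarrow> (A *\<^sub>v v) $ i = (\<Sum>j<dim_col A. A $$ (i,j) * v $ j)"
  unfolding index_mult_mat_vec scalar_prod_def atLeast0LessThan by (intro sum.cong) auto

lemma mm_expand: "i < dim_row A \<Longrightarrow> j < dim_col B \<Longrightarrow> dim_col A = dim_row B \<Longrightarrow>
   (A * B) $$ (i,j) = (\<Sum>k<dim_col A. A $$ (i,k) * B $$ (k,j))"
  unfolding index_mult_mat scalar_prod_def atLeast0LessThan by (intro sum.cong) auto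

lemma adj_sprodc:
  fixes M :: "complex mat"
  assumes M: "M \<in> carrier_mat r c" and x: "x \<in> carrier_vec c" and y: "y \<in> carrier_vec r"
  shows "(M *\<^sub>v x) \<bullet>c y = x \<bullet>c (mat_adjoint M *\<^sub>v y)"
proof -
  have "(M *\<^sub>v x) \<bullet>c y = (\<Sum>i<r. (M *\<^sub>v x)$i * cnj (y$i))"
    using M y by (simp add: sprodc_expand)
  also have "\<dots> = (\<Sum>i<r. (\<Sum>j<c. M$$(i,j) * x$j) * cnj (y$i))"
    by (intro sum.cong refl) (use M x in \<open>simp add: mv_expand del: index_mult_mat_vec\<close>)
  also have "\<dots> = (\<Sum>i<r. \<Sum>j<c. x$j * (M$$(i,j) * cnj (y$i)))"
    by (simp add: sum_distrib_right mult.assoc mult.left_commute)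
  also have "\<dots> = (\<Sum>j<c. \<Sum>i<r. x$j * (M$$(i,j) * cnj (y$i)))"
    by (rule sum.swap)
  also have "\<dots> = (\<Sum>j<c. x$j * cnj (\<Sum>i<r. cnj (M$$(i,j)) * y$i))"
    by (simp add: sum_distrib_left)
  also have "\<dots> = (\<Sum>j<c. x$j * cnj ((mat_adjoint M *\<^sub>v y) $ j))"
    by (intro sum.cong refl) (use M y in \<open>simp add: mv_expand del: index_mult_mat_vec\<close>)
  also have "\<dots> = x \<bullet>c (mat_adjoint M *\<^sub>v y)"
    using M x by (simp add: sprodc_expand)
  finally show ?thesis .
qed

lemma selfadj_sprodc:
  fixes M :: "complex mat"
  assumes M: "M \<in> carrier_mat n n" and h: "mat_adjoint M = M" and x: "x \<in> carrier_vec n" and y: "y \<in> carrier_vec n"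
  shows "(M *\<^sub>v x) \<bullet>c y = x \<bullet>c (M *\<^sub>v y)"
  using adj_sprodc[OF M x y] h by simp

lemma ON_unitary:
  assumes on: "ON n ws"
  shows "mat_adjoint (mat_of_cols n ws) * mat_of_cols n ws = 1\<^sub>m n"
    "mat_of_cols n ws * mat_adjoint (mat_of_cols n ws) = 1\<^sub>m n"
    "mat_of_cols n ws \<in> carrier_mat n n"
proof -
  let ?W = "mat_of_cols n ws"
  have len: "length ws = n" and car: "set ws \<subseteq> carrier_vec n" and o: "\<And>i j. i<n \<Longrightarrow> j<n \<Longrightarrow> ws!i \<bullet>c ws!j = (if i = j then 1 else 0)"
    using on unfolding ON_def by auto
  show W: "?W \<in> carrier_mat n n" using len by (metis mat_of_cols_carrier(1))
  have wc: "\<And>i. i < n \<Longrightarrow> ws!i \<in> carrier_vec n" using car len by auto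
  show 1: "mat_adjoint ?W * ?W = 1\<^sub>m n"
  proof (rule eq_matI)
    fix i j assume i: "i < dim_row (1\<^sub>m n :: complex mat)" and j: "j < dim_col (1\<^sub>m n :: complex mat)"
    hence i: "i < n" and j: "j < n" by auto
    have "(mat_adjoint ?W * ?W) $$ (i,j) = (\<Sum>k<n. cnj (?W $$ (k,i)) * ?W $$ (k,j))"
      using i j len by (simp add: mm_expand del: index_mult_mat)
    also have "\<dots> = (\<Sum>k<n. (ws!j)$k * cnj ((ws!i)$k))"
      using i j len by (simp add: mat_of_cols_def mult_ac)
    also have "\<dots> = ws!j \<bullet>c ws!i" using wc[OF i] wc[OF j] by (simp add: sprodc_expand)
    also have "\<dots> = (1\<^sub>m n :: complex mat) $$ (i,j)" using o[OF j i] i j by auto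
    finally show "(mat_adjoint ?W * ?W) $$ (i,j) = (1\<^sub>m n :: complex mat) $$ (i,j)" .
  qed (use len in auto)
  show "?W * mat_adjoint ?W = 1\<^sub>m n"
    by (rule mat_mult_left_right_inverse[OF _ W 1], use W in auto)
qed

lemma unitary_ON:
  fixes U :: "complex mat"
  assumes U: "U \<in> carrier_mat n n" and uu: "mat_adjoint U * U = 1\<^sub>m n" and on: "ON n xs"
  shows "ON n (map (\<lambda>x. U *\<^sub>v x) xs)"
proof -
  have len: "length xs = n" and car: "set xs \<subseteq> carrier_vec n" and o: "\<And>i j. i<n \<Longrightarrow> j<n \<Longrightarrow> xs!i \<bullet>c xs!j = (if i = j then 1 else 0)"
    using on unfolding ON_def by auto
  have xc: "\<And>i. i < n \<Longrightarrow> xs!i \<in> carrier_vec n" using car len by auto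
  have "\<And>i j. i<n \<Longrightarrow> j<n \<Longrightarrow> (U *\<^sub>v xs!i) \<bullet>c (U *\<^sub>v xs!j) = xs!i \<bullet>c xs!j"
  proof -
    fix i j assume i: "i<n" and j: "j<n"
    have "(U *\<^sub>v xs!i) \<bullet>c (U *\<^sub>v xs!j) = xs!i \<bullet>c (mat_adjoint U *\<^sub>v (U *\<^sub>v xs!j))"
      by (rule adj_sprodc[OF U xc[OF i]], use U xc[OF j] in auto)
    also have "mat_adjoint U *\<^sub>v (U *\<^sub>v xs!j) = (mat_adjoint U * U) *\<^sub>v xs!j"
      using U xc[OF j] by (simp add: assoc_mult_mat_vec[of _ n n _ n])
    also have "\<dots> = xs!j" using uu xc[OF j] by simp
    finally show "(U *\<^sub>v xs!i) \<bullet>c (U *\<^sub>v xs!j) = xs!i \<bullet>c xs!j" .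
  qed
  thus ?thesis using len car o U unfolding ON_def by auto
qed

lemma vCons_sprodc: "dim_vec y = dim_vec y' \<Longrightarrow> vCons a y \<bullet>c vCons b y' = a * cnj b + y \<bullet>c y'"
  by (simp add: sprodc_expand sum.lessThan_Suc_shift del: sum.lessThan_Suc)



lemma sprodc_smult_l: fixes v w :: "complex vec" shows "dim_vec w = dim_vec v \<Longrightarrow> (a \<cdot>\<^sub>v v) \<bullet>c w = a * (v \<bullet>c w)"
  by (simp add: sprodc_expand sum_distrib_left mult_ac)

lemma sprodc_smult_r: fixes v w :: "complex vec" shows "dim_vec w = dim_vec v \<Longrightarrow> v \<bullet>c (b \<cdot>\<^sub>v w) = cnj b * (v \<bullet>c w)"
  by (simp add: sprodc_expand sum_distrib_left mult_ac)

lemma spectral_list: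
  fixes A :: "complex mat"
  assumes "A \<in> carrier_mat n n" "mat_adjoint A = A"
  shows "\<exists>us ls. ON n us \<and> length ls = n \<and> (\<forall>k<n. A *\<^sub>v us!k = complex_of_real (ls!k) \<cdot>\<^sub>v us!k)"
  using assms
proof (induction n arbitrary: A)
  case 0
  then show ?case by (intro exI[of _ "[]"]) (simp add: ON_def)
next
  case (Suc n)
  let ?N = "Suc n"
  have A: "A \<in> carrier_mat ?N ?N" and h: "mat_adjoint A = A" using Suc.prems by auto
  have "degree (char_poly A) = ?N" using degree_monic_char_poly[OF A] by simp
  hence "\<not> constant (poly (char_poly A))" by (simp add: constant_degree)
  then obtain e where "poly (char_poly A) e = 0" using fundamental_theorem_of_algebra by blast
  hence ev: "eigenvalue A e" using eigenvalue_root_char_poly[OF A] by simp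
  define v0 where "v0 = find_eigenvector A e"
  have "eigenvector A v0 e" using find_eigenvector[OF A ev] unfolding v0_def .
  hence v0: "v0 \<in> carrier_vec ?N" "v0 \<noteq> 0\<^sub>v ?N" "A *\<^sub>v v0 = e \<cdot>\<^sub>v v0"
    using A unfolding eigenvector_def by auto
  have "v0 \<bullet>c v0 \<noteq> 0" using conjugate_square_eq_0_vec[OF v0(1)] v0(2) by simp
  hence vn: "vnorm v0 \<noteq> 0" using vnorm_sprod[of v0] by auto
  define c where "c = complex_of_real (1 / vnorm v0)"
  define v where "v = c \<cdot>\<^sub>v v0"
  have vc: "v \<in> carrier_vec ?N" using v0 by (simp add: v_def)
  have v1: "v \<bullet>c v = 1"
  proof -
    have "v \<bullet>c v = c * cnj c * (v0 \<bullet>c v0)" unfolding v_def by (rule sprodc_smult) simp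
    also have "\<dots> = complex_of_real ((1 / vnorm v0) * (1 / vnorm v0) * (vnorm v0)^2)"
      unfolding c_def vnorm_sprod[symmetric] by simp
    also have "(1 / vnorm v0) * (1 / vnorm v0) * (vnorm v0)^2 = 1" using vn by (simp add: power2_eq_square)
    finally show ?thesis by simp
  qed
  have Av: "A *\<^sub>v v = e \<cdot>\<^sub>v v" unfolding v_def using mult_mat_vec[OF A v0(1)] v0(3)
    by (simp add: smult_smult_assoc mult.commute)
  obtain ws where ws: "ON ?N ws" "ws!0 = v" using unit_completion[OF vc v1] by blast
  have wsc: "\<And>i. i < ?N \<Longrightarrow> ws!i \<in> carrier_vec ?N" and wslen: "length ws = ?N"
    and wso: "\<And>i j. i < ?N \<Longrightarrow> j < ?N \<Longrightarrow> ws!i \<bullet>c ws!j = (if i = j then 1 else 0)"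
    using ws(1) unfolding ON_def by auto
  define W where "W = mat_of_cols ?N ws"
  have W: "W \<in> carrier_mat ?N ?N" "mat_adjoint W * W = 1\<^sub>m ?N" "W * mat_adjoint W = 1\<^sub>m ?N"
    using ON_unitary[OF ws(1)] unfolding W_def by auto
  have colW: "\<And>j. j < ?N \<Longrightarrow> col W j = ws!j" unfolding W_def using wslen wsc by simp
  have ereal: "e = complex_of_real (Re e)"
  proof -
    have "(A *\<^sub>v v) \<bullet>c v = e" unfolding Av using v1 vc by (simp add: sprodc_smult_l)
    moreover have "(A *\<^sub>v v) \<bullet>c v = v \<bullet>c (A *\<^sub>v v)" by (rule selfadj_sprodc[OF A h vc vc])
    moreover have "v \<bullet>c (A *\<^sub>v v) = cnj e" unfolding Av using v1 vc by (simp add: sprodc_smult_r)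
    ultimately have "cnj e = e" by simp
    thus ?thesis by (simp add: complex_eq_iff)
  qed
  define B where "B = mat_adjoint W * A * W"
  have B: "B \<in> carrier_mat ?N ?N" unfolding B_def using W A by auto
  have Bidx: "B $$ (i,j) = (A *\<^sub>v ws!j) \<bullet>c ws!i" if i: "i < ?N" and j: "j < ?N" for i j
  proof -
    have "B = mat_adjoint W * (A * W)" unfolding B_def using W A by (simp add: assoc_mult_mat[of _ ?N ?N])
    moreover have "(mat_adjoint W * (A * W)) $$ (i,j) = (\<Sum>k<?N. mat_adjoint W $$ (i,k) * (A * W) $$ (k,j))"
      by (rule trans[OF mm_expand]) (use W A i j in auto)
    ultimately have "B $$ (i,j) = (\<Sum>k<?N. mat_adjoint W $$ (i,k) * (A * W) $$ (k,j))" by simp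
    also have "\<dots> = (\<Sum>k<?N. (A *\<^sub>v ws!j) $ k * cnj ((ws!i) $ k))"
    proof (intro sum.cong refl)
      fix k assume k: "k \<in> {..<?N}"
      have "(A * W) $$ (k,j) = (A *\<^sub>v col W j) $ k" using A W k j by simp
      also have "\<dots> = (A *\<^sub>v ws!j) $ k" using colW[OF j] by simp
      finally have 1: "(A * W) $$ (k,j) = (A *\<^sub>v ws!j) $ k" .
      have 2: "mat_adjoint W $$ (i,k) = cnj ((ws!i) $ k)" using W i k
        by (simp add: W_def mat_of_cols_def wslen)
      show "mat_adjoint W $$ (i,k) * (A * W) $$ (k,j) = (A *\<^sub>v ws!j) $ k * cnj ((ws!i) $ k)"
        unfolding 1 2 by simp
    qed
    also have "\<dots> = (A *\<^sub>v ws!j) \<bullet>c ws!i" using A wsc[OF i] by (simp add: sprodc_expand)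
    finally show ?thesis .
  qed
  define A3 where "A3 = mat n n (\<lambda>(i,j). B $$ (Suc i, Suc j))"
  have A3: "A3 \<in> carrier_mat n n" unfolding A3_def by simp
  have h3: "mat_adjoint A3 = A3"
  proof (rule eq_matI)
    fix i j assume "i < dim_row A3" "j < dim_col A3"
    hence i: "i < n" and j: "j < n" unfolding A3_def by auto
    have "mat_adjoint A3 $$ (i,j) = cnj ((A *\<^sub>v ws!Suc i) \<bullet>c ws!Suc j)"
      using i j by (simp add: A3_def Bidx)
    also have "\<dots> = ws!Suc j \<bullet>c (A *\<^sub>v ws!Suc i)"
      by (rule sprodc_conj) (use A wsc i j in simp)
    also have "\<dots> = (A *\<^sub>v ws!Suc j) \<bullet>c ws!Suc i"
      by (rule selfadj_sprodc[OF A h, symmetric]) (use wsc i j in auto)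
    also have "\<dots> = A3 $$ (i,j)" using i j by (simp add: A3_def Bidx)
    finally show "mat_adjoint A3 $$ (i,j) = A3 $$ (i,j)" .
  qed (auto simp: A3_def)
  obtain ys \<mu>s where IH: "ON n ys" "length \<mu>s = n" "\<And>k. k<n \<Longrightarrow> A3 *\<^sub>v ys!k = complex_of_real (\<mu>s!k) \<cdot>\<^sub>v ys!k"
    using Suc.IH[OF A3 h3] by blast
  have ysc: "\<And>i. i < n \<Longrightarrow> ys!i \<in> carrier_vec n" and yslen: "length ys = n"
    and yso: "\<And>i j. i < n \<Longrightarrow> j < n \<Longrightarrow> ys!i \<bullet>c ys!j = (if i = j then 1 else 0)"
    using IH(1) unfolding ON_def by auto
  define xs where "xs = vCons 1 (0\<^sub>v n) # map (vCons 0) ys"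
  have xsc: "\<And>i. i < ?N \<Longrightarrow> xs!i \<in> carrier_vec ?N"
    unfolding xs_def using ysc yslen by (auto simp: nth_Cons split: nat.splits)
  have xsON: "ON ?N xs"
    unfolding ON_def
  proof (intro conjI allI impI)
    show "length xs = ?N" using yslen by (simp add: xs_def)
    show "set xs \<subseteq> carrier_vec ?N" using ysc yslen by (auto simp: xs_def in_set_conv_nth)
    fix i j assume i: "i < ?N" and j: "j < ?N"
    show "xs!i \<bullet>c xs!j = (if i = j then 1 else 0)"
    proof (cases i)
      case 0
      then show ?thesis
      proof (cases j)
        case 0 with \<open>i = 0\<close> show ?thesis using yslen by (simp add: xs_def vCons_sprodc sprodc_expand)
      next
        case (Suc j') with \<open>i = 0\<close> j ysc[of j'] show ?thesis
          using yslen by (simp add: xs_def vCons_sprodc sprodc_expand)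
      qed
    next
      case (Suc i')
      then show ?thesis
      proof (cases j)
        case 0 with \<open>i = Suc i'\<close> i ysc[of i'] show ?thesis using yslen by (simp add: xs_def vCons_sprodc sprodc_expand)
      next
        case (Suc j') with \<open>i = Suc i'\<close> i j ysc[of j'] ysc[of i'] yso[of i' j'] show ?thesis
          using yslen by (simp add: xs_def vCons_sprodc)
      qed
    qed
  qed
  have B0: "B $$ (0, Suc j) = 0" if j: "j < n" for j
  proof -
    have "B $$ (0, Suc j) = (A *\<^sub>v ws!Suc j) \<bullet>c ws!0" using j by (simp add: Bidx)
    also have "\<dots> = ws!Suc j \<bullet>c (A *\<^sub>v ws!0)"
      by (rule selfadj_sprodc[OF A h]) (use wsc j in auto)
    also have "\<dots> = cnj e * (ws!Suc j \<bullet>c ws!0)" unfolding ws(2) Av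
      by (rule sprodc_smult_r) (use wsc[of "Suc j"] j vc in auto)
    also have "\<dots> = 0" using wso[of "Suc j" 0] j by simp
    finally show ?thesis .
  qed
  have Beig: "B *\<^sub>v (vCons 0 (ys!k)) = complex_of_real (\<mu>s!k) \<cdot>\<^sub>v vCons 0 (ys!k)" if k: "k < n" for k
  proof (rule eq_vecI)
    show "dim_vec (B *\<^sub>v vCons 0 (ys ! k)) = dim_vec (complex_of_real (\<mu>s ! k) \<cdot>\<^sub>v vCons 0 (ys ! k))"
      using B ysc[OF k] by simp
    fix i assume "i < dim_vec (complex_of_real (\<mu>s ! k) \<cdot>\<^sub>v vCons 0 (ys ! k))"
    hence i: "i < ?N" using ysc[OF k] by simp
    have "(B *\<^sub>v vCons 0 (ys!k)) $ i = (\<Sum>j<?N. B $$ (i,j) * vCons 0 (ys!k) $ j)"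
      using B i ysc[OF k] by (simp add: mv_expand del: index_mult_mat_vec)
    also have "\<dots> = (\<Sum>j<n. B $$ (i, Suc j) * (ys!k) $ j)"
      by (simp add: sum.lessThan_Suc_shift del: sum.lessThan_Suc)
    also have "\<dots> = (complex_of_real (\<mu>s ! k) \<cdot>\<^sub>v vCons 0 (ys ! k)) $ i"
    proof (cases i)
      case 0
      then show ?thesis using B0 by simp
    next
      case (Suc i')
      hence i': "i' < n" using i by simp
      have "(\<Sum>j<n. B $$ (i, Suc j) * (ys!k) $ j) = (A3 *\<^sub>v ys!k) $ i'"
        using i' ysc[OF k] A3 by (simp add: mv_expand A3_def Suc del: index_mult_mat_vec)
      also have "\<dots> = (complex_of_real (\<mu>s ! k) \<cdot>\<^sub>v ys!k) $ i'" using IH(3)[OF k] by simp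
      finally show ?thesis using Suc i' ysc[OF k] by simp
    qed
    finally show "(B *\<^sub>v vCons 0 (ys!k)) $ i = (complex_of_real (\<mu>s ! k) \<cdot>\<^sub>v vCons 0 (ys ! k)) $ i" .
  qed
  have WB: "W * B = A * W"
  proof -
    have "W * B = W * (mat_adjoint W * (A * W))" unfolding B_def using W A by (simp add: assoc_mult_mat[of _ ?N ?N])
    also have "\<dots> = (W * mat_adjoint W) * (A * W)" by (rule assoc_mult_mat[symmetric, of _ ?N ?N _ ?N _ ?N]) (use W A in auto)
    also have "\<dots> = A * W" using W A by simp
    finally show ?thesis .
  qed
  have key: "A *\<^sub>v (W *\<^sub>v x) = W *\<^sub>v (B *\<^sub>v x)" if x: "x \<in> carrier_vec ?N" for x
  proof -
    have "W *\<^sub>v (B *\<^sub>v x) = (W * B) *\<^sub>v x" using W B x by simp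
    also have "\<dots> = (A * W) *\<^sub>v x" unfolding WB ..
    also have "\<dots> = A *\<^sub>v (W *\<^sub>v x)" using W A x by simp
    finally show ?thesis by simp
  qed
  have Wx0: "W *\<^sub>v xs!0 = v"
  proof (rule eq_vecI)
    fix r assume "r < dim_vec v"
    hence r: "r < ?N" using vc by simp
    have "(W *\<^sub>v xs!0) $ r = (\<Sum>j<?N. W $$ (r,j) * (xs!0) $ j)"
      using W r by (simp add: mv_expand xs_def del: index_mult_mat_vec)
    also have "\<dots> = W $$ (r, 0)"
      by (simp add: sum.lessThan_Suc_shift xs_def del: sum.lessThan_Suc)
    also have "\<dots> = v $ r" using r wslen ws(2) by (simp add: W_def mat_of_cols_def)
    finally show "(W *\<^sub>v xs!0) $ r = v $ r" .
  qed (use W vc in auto)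
  define us where "us = map (\<lambda>x. W *\<^sub>v x) xs"
  define ls where "ls = Re e # \<mu>s"
  have "ON ?N us" unfolding us_def by (rule unitary_ON[OF W(1) W(2) xsON])
  moreover have "length ls = ?N" using IH(2) by (simp add: ls_def)
  moreover have "\<forall>k<?N. A *\<^sub>v us!k = complex_of_real (ls!k) \<cdot>\<^sub>v us!k"
  proof (intro allI impI)
    fix k assume k: "k < ?N"
    have len: "length xs = ?N" using yslen by (simp add: xs_def)
    show "A *\<^sub>v us!k = complex_of_real (ls!k) \<cdot>\<^sub>v us!k"
    proof (cases k)
      case 0
      then show ?thesis using Wx0 Av ereal len by (simp add: us_def ls_def)
    next
      case (Suc k')
      hence k': "k' < n" using k by simp
      have xk: "xs!k = vCons 0 (ys!k')" using Suc k' yslen by (simp add: xs_def)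
      have "A *\<^sub>v us!k = W *\<^sub>v (B *\<^sub>v xs!k)" using key[OF xsc[OF k]] len k by (simp add: us_def)
      also have "\<dots> = W *\<^sub>v (complex_of_real (\<mu>s!k') \<cdot>\<^sub>v xs!k)" unfolding xk Beig[OF k'] ..
      also have "\<dots> = complex_of_real (\<mu>s!k') \<cdot>\<^sub>v (W *\<^sub>v xs!k)" by (rule mult_mat_vec[OF W(1) xsc[OF k]])
      finally show ?thesis using len k Suc by (simp add: us_def ls_def)
    qed
  qed
  ultimately show ?case by blast
qed



lemma mm_expand': "A \<in> carrier_mat r n \<Longrightarrow> B \<in> carrier_mat n c \<Longrightarrow> i < r \<Longrightarrow> j < c \<Longrightarrow>
   (A * B) $$ (i,j) = (\<Sum>k<n. A $$ (i,k) * B $$ (k,j))"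
  by (subst mm_expand) auto

lemma mv_expand': "A \<in> carrier_mat r n \<Longrightarrow> v \<in> carrier_vec n \<Longrightarrow> i < r \<Longrightarrow>
   (A *\<^sub>v v) $ i = (\<Sum>j<n. A $$ (i,j) * v $ j)"
  by (subst mv_expand) auto

definition dg :: "complex list \<Rightarrow> complex mat" where
  "dg cs = mat (length cs) (length cs) (\<lambda>(i,j). if i = j then cs!i else 0)"

lemma dg_carrier[simp]: "dg cs \<in> carrier_mat (length cs) (length cs)"
  "dim_row (dg cs) = length cs" "dim_col (dg cs) = length cs"
  by (auto simp: dg_def)

lemma mult_dg_idx: "M \<in> carrier_mat r (length cs) \<Longrightarrow> i < r \<Longrightarrow> k < length cs \<Longrightarrow>
  (M * dg cs) $$ (i,k) = M $$ (i,k) * cs!k"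
proof -
  assume M: "M \<in> carrier_mat r (length cs)" and i: "i < r" and k: "k < length cs"
  have "(M * dg cs) $$ (i,k) = (\<Sum>j<length cs. M $$ (i,j) * dg cs $$ (j,k))"
    by (rule mm_expand'[OF M dg_carrier(1) i k])
  also have "\<dots> = (\<Sum>j<length cs. if j = k then M $$ (i,k) * cs!k else 0)"
    by (intro sum.cong refl) (use k in \<open>auto simp: dg_def\<close>)
  also have "\<dots> = M $$ (i,k) * cs!k" using k by simp
  finally show ?thesis .
qed

lemma dg_mult_vec_idx: "z \<in> carrier_vec (length cs) \<Longrightarrow> i < length cs \<Longrightarrow> (dg cs *\<^sub>v z) $ i = cs!i * z$i"
proof -
  assume z: "z \<in> carrier_vec (length cs)" and i: "i < length cs"
  have "(dg cs *\<^sub>v z) $ i = (\<Sum>j<length cs. dg cs $$ (i,j) * z$j)"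
    by (rule mv_expand'[OF dg_carrier(1) z i])
  also have "\<dots> = (\<Sum>j<length cs. if j = i then cs!i * z$i else 0)"
    by (intro sum.cong refl) (use i in \<open>auto simp: dg_def\<close>)
  also have "\<dots> = cs!i * z$i" using i by simp
  finally show ?thesis .
qed

lemma eig_decomp:
  fixes A :: "complex mat"
  assumes A: "A \<in> carrier_mat m m" and on: "ON m us" and len: "length ls = m"
    and eig: "\<forall>k<m. A *\<^sub>v us!k = complex_of_real (ls!k) \<cdot>\<^sub>v us!k"
  shows "A = mat_of_cols m us * dg (map complex_of_real ls) * mat_adjoint (mat_of_cols m us)"
proof -
  let ?U = "mat_of_cols m us" and ?D = "dg (map complex_of_real ls)"
  note U = ON_unitary[OF on]
  have uslen: "length us = m" and usc: "\<And>k. k < m \<Longrightarrow> us!k \<in> carrier_vec m"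
    using on unfolding ON_def by auto
  have D: "?D \<in> carrier_mat m m" using len dg_carrier(1)[of "map complex_of_real ls"] by simp
  have AU: "A * ?U = ?U * ?D"
  proof (rule eq_matI)
    fix i k assume "i < dim_row (?U * ?D)" "k < dim_col (?U * ?D)"
    hence i: "i < m" and k: "k < m" using D U by auto
    have "(A * ?U) $$ (i,k) = (A *\<^sub>v col ?U k) $ i" using A U i k uslen by (simp add: carrier_matD)
    also have "col ?U k = us!k" using uslen usc k by simp
    also have "(A *\<^sub>v us!k) $ i = complex_of_real (ls!k) * (us!k) $ i" using eig k i usc[OF k] by simp
    also have "\<dots> = (?U * ?D) $$ (i,k)" 
      by (subst mult_dg_idx[of _ m]) (use U len i k uslen in \<open>auto simp: mat_of_cols_def\<close>)
    finally show "(A * ?U) $$ (i,k) = (?U * ?D) $$ (i,k)" .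
  qed (use D U A uslen len in auto)
  have "A = A * (?U * mat_adjoint ?U)" using U A by simp
  also have "\<dots> = (A * ?U) * mat_adjoint ?U" by (rule assoc_mult_mat[symmetric, of _ m m _ m _ m]) (use A U in auto)
  also have "\<dots> = ?U * ?D * mat_adjoint ?U" unfolding AU ..
  finally show ?thesis .
qed

lemma unitary_norm:
  fixes U :: "complex mat"
  assumes U: "U \<in> carrier_mat m m" and uu: "mat_adjoint U * U = 1\<^sub>m m" and z: "z \<in> carrier_vec m"
  shows "vnorm (U *\<^sub>v z) = vnorm z"
proof -
  have "complex_of_real ((vnorm (U *\<^sub>v z))^2) = (U *\<^sub>v z) \<bullet>c (U *\<^sub>v z)" by (rule vnorm_sprod)
  also have "\<dots> = z \<bullet>c (mat_adjoint U *\<^sub>v (U *\<^sub>v z))" by (rule adj_sprodc) (use U z in auto)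
  also have "mat_adjoint U *\<^sub>v (U *\<^sub>v z) = (mat_adjoint U * U) *\<^sub>v z"
    using U z by (simp add: assoc_mult_mat_vec[of _ m m _ m])
  also have "\<dots> = z" using uu z by simp
  also have "z \<bullet>c z = complex_of_real ((vnorm z)^2)" by (rule vnorm_sprod[symmetric])
  finally have "(vnorm (U *\<^sub>v z))^2 = (vnorm z)^2" by (simp only: of_real_eq_iff)
  thus ?thesis using vnorm_nonneg by (metis power2_eq_imp_eq)
qed

lemma adj_adj[simp]: "mat_adjoint (mat_adjoint A) = (A :: complex mat)"
  by (rule eq_matI) auto

lemma proots_lin_list: "proots (\<Prod>a\<leftarrow>xs. [:- a, 1:]) = mset (xs :: complex list)"
proof (induction xs)
  case Nil then show ?case by simp
next
  case (Cons a xs)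
  have "proots (\<Prod>a\<leftarrow>a#xs. [:- a, 1:]) = proots ([:- a, 1:] * (\<Prod>a\<leftarrow>xs. [:- a, 1:]))" by simp
  also have "\<dots> = proots [:- a, 1:] + proots (\<Prod>a\<leftarrow>xs. [:- a, 1:])"
    by (rule proots_mult) (auto simp: prod_list_zero_iff)
  finally show ?case using Cons by simp
qed

lemma trace_norm_eig:
  fixes A :: "complex mat"
  assumes A: "A \<in> carrier_mat m m" and h: "mat_adjoint A = A" and on: "ON m us" and len: "length ls = m"
    and eig: "\<forall>k<m. A *\<^sub>v us!k = complex_of_real (ls!k) \<cdot>\<^sub>v us!k"
  shows "trace_norm A = (\<Sum>k<m. \<bar>ls!k\<bar>)"
proof -
  let ?U = "mat_of_cols m us" and ?D = "dg (map complex_of_real ls)"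
  let ?D2 = "dg (map (\<lambda>x. complex_of_real (x^2)) ls)"
  note U = ON_unitary[OF on]
  have D: "?D \<in> carrier_mat m m" using len dg_carrier(1)[of "map complex_of_real ls"] by simp
  have D2: "?D2 \<in> carrier_mat m m" using len dg_carrier(1)[of "map (\<lambda>x. complex_of_real (x^2)) ls"] by simp
  have dec: "A = ?U * ?D * mat_adjoint ?U" by (rule eig_decomp[OF A on len eig])
  have DD: "?D * ?D = ?D2"
  proof (rule eq_matI)
    fix i j assume "i < dim_row ?D2" "j < dim_col ?D2"
    hence i: "i < m" and j: "j < m" using len by auto
    show "(?D * ?D) $$ (i,j) = ?D2 $$ (i,j)"
      by (subst mult_dg_idx[of _ m]) (use D len i j in \<open>auto simp: dg_def power2_eq_square\<close>)
  qed (use D D2 in auto)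
  have UA: "mat_adjoint ?U \<in> carrier_mat m m" using U by simp
  have c1: "\<And>Y. Y \<in> carrier_mat m m \<Longrightarrow> mat_adjoint ?U * (?U * Y) = Y"
  proof -
    fix Y :: "complex mat" assume Y: "Y \<in> carrier_mat m m"
    have "mat_adjoint ?U * (?U * Y) = (mat_adjoint ?U * ?U) * Y"
      by (rule assoc_mult_mat[symmetric]) (use U UA Y in auto)
    thus "mat_adjoint ?U * (?U * Y) = Y" using U Y by simp
  qed
  have "A * A = (?U * ?D * mat_adjoint ?U) * (?U * ?D * mat_adjoint ?U)" using dec by simp
  also have "\<dots> = ?U * (?D * ?D) * mat_adjoint ?U"
    using U D UA by (simp add: assoc_mult_mat[of _ m m _ m _ m] c1)
  finally have AA: "A * A = ?U * ?D2 * mat_adjoint ?U" unfolding DD .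
  have sim: "similar_mat (A * A) ?D2"
    unfolding similar_mat_def similar_mat_wit_def
    by (rule exI[of _ ?U], rule exI[of _ "mat_adjoint ?U"]) (use A U UA D2 AA in \<open>auto simp: Let_def\<close>)
  have ut: "upper_triangular ?D2" using len by (auto simp: upper_triangular_def dg_def)
  have "char_poly (mat_adjoint A * A) = char_poly ?D2" using h char_poly_similar[OF sim] by simp
  also have "\<dots> = (\<Prod>a\<leftarrow>diag_mat ?D2. [:- a, 1:])" by (rule char_poly_upper_triangular[OF D2 ut])
  finally have cp: "char_poly (mat_adjoint A * A) = (\<Prod>a\<leftarrow>diag_mat ?D2. [:- a, 1:])" .
  have dm: "diag_mat ?D2 = map (\<lambda>x. complex_of_real (x^2)) ls"
    using len by (intro nth_equalityI) (auto simp: diag_mat_def dg_def)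
  have "trace_norm A = (\<Sum>e\<in># mset (map (\<lambda>x. complex_of_real (x^2)) ls). sqrt (Re e))"
    unfolding trace_norm_def cp proots_lin_list dm ..
  also have "\<dots> = (\<Sum>x\<leftarrow>ls. \<bar>x\<bar>)"
  proof -
    have r: "\<And>x. sqrt (Re (complex_of_real (x^2))) = \<bar>x\<bar>" by (simp del: of_real_power)
    show ?thesis by (induction ls) (simp_all add: r del: of_real_power)
  qed
  also have "\<dots> = (\<Sum>k<m. \<bar>ls!k\<bar>)" using len by (simp add: sum_list_sum_nth atLeast0LessThan)
  finally show ?thesis .
qed



lemma vnorm_L2: "vnorm v = L2_set (\<lambda>i. cmod (v$i)) {..<dim_vec v}"
  by (simp add: vnorm_def L2_set_def)

lemma cs_ineq:
  fixes x y :: "complex vec"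
  assumes "dim_vec y = dim_vec x"
  shows "cmod (x \<bullet>c y) \<le> vnorm x * vnorm y"
proof -
  have "cmod (x \<bullet>c y) = cmod (\<Sum>i<dim_vec x. x$i * cnj (y$i))" using assms by (simp add: sprodc_expand)
  also have "\<dots> \<le> (\<Sum>i<dim_vec x. cmod (x$i) * cmod (y$i))"
    by (rule order_trans[OF norm_sum]) (simp add: norm_mult)
  also have "\<dots> = (\<Sum>i<dim_vec x. \<bar>cmod (x$i)\<bar> * \<bar>cmod (y$i)\<bar>)" by simp
  also have "\<dots> \<le> L2_set (\<lambda>i. cmod (x$i)) {..<dim_vec x} * L2_set (\<lambda>i. cmod (y$i)) {..<dim_vec x}"
    by (rule L2_set_mult_ineq)
  also have "\<dots> = vnorm x * vnorm y" using assms by (simp add: vnorm_L2)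
  finally show ?thesis .
qed

lemma vnorm_add:
  fixes x y :: "complex vec"
  assumes "dim_vec y = dim_vec x"
  shows "vnorm (x + y) \<le> vnorm x + vnorm y"
proof -
  have "vnorm (x + y) = L2_set (\<lambda>i. cmod ((x+y)$i)) {..<dim_vec x}" using assms by (simp add: vnorm_L2)
  also have "\<dots> \<le> L2_set (\<lambda>i. cmod (x$i) + cmod (y$i)) {..<dim_vec x}"
    by (rule L2_set_mono) (use assms in \<open>auto intro: norm_triangle_ineq\<close>)
  also have "\<dots> \<le> L2_set (\<lambda>i. cmod (x$i)) {..<dim_vec x} + L2_set (\<lambda>i. cmod (y$i)) {..<dim_vec x}"
    by (rule L2_set_triangle_ineq)
  also have "\<dots> = vnorm x + vnorm y" using assms by (simp add: vnorm_L2)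
  finally show ?thesis .
qed

lemma vnorm_minus:
  fixes x y :: "complex vec"
  assumes "dim_vec y = dim_vec x"
  shows "vnorm (x - y) \<le> vnorm x + vnorm y"
proof -
  have "vnorm (x - y) = L2_set (\<lambda>i. cmod ((x-y)$i)) {..<dim_vec x}" using assms by (simp add: vnorm_L2)
  also have "\<dots> \<le> L2_set (\<lambda>i. cmod (x$i) + cmod (y$i)) {..<dim_vec x}"
    by (rule L2_set_mono) (use assms in \<open>auto intro: norm_triangle_ineq4\<close>)
  also have "\<dots> \<le> L2_set (\<lambda>i. cmod (x$i)) {..<dim_vec x} + L2_set (\<lambda>i. cmod (y$i)) {..<dim_vec x}"
    by (rule L2_set_triangle_ineq)
  also have "\<dots> = vnorm x + vnorm y" using assms by (simp add: vnorm_L2)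
  finally show ?thesis .
qed

lemma vnorm_sq: "(vnorm v)^2 = (\<Sum>i<dim_vec v. (cmod (v$i))^2)"
  unfolding vnorm_def by (simp add: sum_nonneg)

lemma vnorm_entry: "i < dim_vec v \<Longrightarrow> cmod (v$i) \<le> vnorm v"
proof -
  assume i: "i < dim_vec v"
  have "(cmod (v$i))^2 \<le> (\<Sum>k<dim_vec v. (cmod (v$k))^2)"
    by (rule member_le_sum) (use i in auto)
  hence "(cmod (v$i))^2 \<le> (vnorm v)^2" by (simp add: vnorm_sq)
  thus ?thesis using vnorm_nonneg by (rule power2_le_imp_le)
qed

definition frob :: "complex mat \<Rightarrow> real" where
  "frob M = sqrt (\<Sum>i<dim_row M. \<Sum>j<dim_col M. (cmod (M$$(i,j)))^2)"

lemma frob_bound: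
  fixes M :: "complex mat"
  assumes M: "M \<in> carrier_mat r c" and v: "v \<in> carrier_vec c"
  shows "vnorm (M *\<^sub>v v) \<le> frob M * vnorm v"
proof -
  have row: "(cmod ((M *\<^sub>v v)$i))^2 \<le> (\<Sum>j<c. (cmod (M$$(i,j)))^2) * (vnorm v)^2" if i: "i < r" for i
  proof -
    have "cmod ((M *\<^sub>v v)$i) = cmod (\<Sum>j<c. M$$(i,j) * v$j)" using mv_expand'[OF M v i] by simp
    also have "\<dots> \<le> (\<Sum>j<c. \<bar>cmod (M$$(i,j))\<bar> * \<bar>cmod (v$j)\<bar>)"
      by (rule order_trans[OF norm_sum]) (simp add: norm_mult)
    also have "\<dots> \<le> L2_set (\<lambda>j. cmod (M$$(i,j))) {..<c} * L2_set (\<lambda>j. cmod (v$j)) {..<c}"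
      by (rule L2_set_mult_ineq)
    also have "\<dots> = sqrt (\<Sum>j<c. (cmod (M$$(i,j)))^2) * vnorm v" using v by (simp add: vnorm_L2 L2_set_def)
    finally have le: "cmod ((M *\<^sub>v v)$i) \<le> sqrt (\<Sum>j<c. (cmod (M$$(i,j)))^2) * vnorm v" .
    have "(cmod ((M *\<^sub>v v)$i))^2 \<le> (sqrt (\<Sum>j<c. (cmod (M$$(i,j)))^2) * vnorm v)^2"
      by (rule power_mono[OF le]) simp
    also have "\<dots> = (\<Sum>j<c. (cmod (M$$(i,j)))^2) * (vnorm v)^2"
      by (simp add: power_mult_distrib sum_nonneg)
    finally show ?thesis .
  qed
  have "(vnorm (M *\<^sub>v v))^2 = (\<Sum>i<r. (cmod ((M *\<^sub>v v)$i))^2)" using M by (simp add: vnorm_sq)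
  also have "\<dots> \<le> (\<Sum>i<r. (\<Sum>j<c. (cmod (M$$(i,j)))^2) * (vnorm v)^2)"
    by (rule sum_mono) (use row in auto)
  also have "\<dots> = (frob M * vnorm v)^2" using M
    by (simp add: frob_def power_mult_distrib sum_distrib_right sum_nonneg)
  finally have "(vnorm (M *\<^sub>v v))^2 \<le> (frob M * vnorm v)^2" .
  moreover have "frob M * vnorm v \<ge> 0" using vnorm_nonneg[of v] by (simp add: frob_def sum_nonneg)
  ultimately show ?thesis by (rule power2_le_imp_le)
qed

lemma op_norm_bdd:
  assumes M: "M \<in> carrier_mat r c"
  shows "bdd_above {vnorm (M *\<^sub>v v) | v. v \<in> carrier_vec (dim_col M) \<and> vnorm v = 1}"
  by (rule bdd_aboveI[of _ "frob M"]) (use frob_bound[OF M] M in fastforce)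

lemma op_norm_ge:
  assumes M: "M \<in> carrier_mat r c" and v: "v \<in> carrier_vec c" and v1: "vnorm v = 1"
  shows "vnorm (M *\<^sub>v v) \<le> op_norm M"
  unfolding op_norm_def by (rule cSup_upper[OF _ op_norm_bdd[OF M]]) (use M v v1 in auto)

lemma vnorm_unit: "k < c \<Longrightarrow> vnorm (unit_vec c k :: complex vec) = 1"
proof -
  assume k: "k < c"
  have "(\<Sum>i<c. (cmod ((unit_vec c k :: complex vec)$i))^2) = (\<Sum>i<c. if i = k then 1 else 0)"
    by (intro sum.cong refl) (auto simp: unit_vec_def)
  also have "\<dots> = 1" using k by simp
  finally show ?thesis unfolding vnorm_def by simp
qed

lemma op_norm_le:
  assumes M: "M \<in> carrier_mat r c" and c: "c > 0"
    and b: "\<And>v. v \<in> carrier_vec c \<Longrightarrow> vnorm v = 1 \<Longrightarrow> vnorm (M *\<^sub>v v) \<le> K"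
  shows "op_norm M \<le> K"
  unfolding op_norm_def
proof (rule cSup_least)
  show "{vnorm (M *\<^sub>v v) |v. v \<in> carrier_vec (dim_col M) \<and> vnorm v = 1} \<noteq> {}"
    using vnorm_unit[OF c] M by (auto intro!: exI[of _ "unit_vec c 0"])
qed (use b M in auto)

lemma entry_le_op_norm:
  fixes M :: "complex mat"
  assumes M: "M \<in> carrier_mat r c" and i: "i < r" and k: "k < c"
  shows "cmod (M $$ (i,k)) \<le> op_norm M"
proof -
  have "(M *\<^sub>v unit_vec c k) $ i = (\<Sum>j<c. M$$(i,j) * unit_vec c k $ j)"
    by (rule mv_expand'[OF M _ i]) simp
  also have "\<dots> = (\<Sum>j<c. if j = k then M$$(i,k) else 0)"
    by (intro sum.cong refl) (auto simp: unit_vec_def)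
  also have "\<dots> = M$$(i,k)" using k by simp
  finally have e: "(M *\<^sub>v unit_vec c k) $ i = M$$(i,k)" .
  have "cmod (M$$(i,k)) \<le> vnorm (M *\<^sub>v unit_vec c k)"
    using vnorm_entry[of i "M *\<^sub>v unit_vec c k"] M i e by simp
  also have "\<dots> \<le> op_norm M" by (rule op_norm_ge[OF M]) (use vnorm_unit[OF k] in auto)
  finally show ?thesis .
qed



lemma hadamard_carrier[simp]: "A \<in> carrier_mat r c \<Longrightarrow> hadamard A B \<in> carrier_mat r c"
  unfolding hadamard_def carrier_mat_def by auto

lemma hadamard_dim[simp]: "dim_row (hadamard A B) = dim_row A" "dim_col (hadamard A B) = dim_col A"
  unfolding hadamard_def by auto

lemma hadamard_idx[simp]: "i < dim_row A \<Longrightarrow> j < dim_col A \<Longrightarrow> hadamard A B $$ (i,j) = A $$ (i,j) * B $$ (i,j)"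
  unfolding hadamard_def by auto

lemma block_bound:
  fixes G :: "complex mat" and f :: "nat \<Rightarrow> 'b"
  assumes G: "G \<in> carrier_mat m m" and C0: "C \<ge> 0"
    and C: "\<And>z. z \<in> carrier_vec m \<Longrightarrow> vnorm (G *\<^sub>v z) \<le> C * vnorm z"
    and y: "y \<in> carrier_vec m"
  shows "vnorm (hadamard G (mat m m (\<lambda>(i,k). if f i = f k then 1 else 0)) *\<^sub>v y) \<le> C * vnorm y"
proof -
  define E where "E = mat m m (\<lambda>(i,k). if f i = f k then 1 else (0::complex))"
  define H where "H = hadamard G E"
  have H: "H \<in> carrier_mat m m" using G by (simp add: H_def)
  define ya where "ya = (\<lambda>a. vec m (\<lambda>k. if f k = a then y$k else 0))"
  have yac: "\<And>a. ya a \<in> carrier_vec m" by (simp add: ya_def)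
  have Hy: "(H *\<^sub>v y)$i = (G *\<^sub>v ya (f i))$i" if i: "i < m" for i
  proof -
    have "(H *\<^sub>v y)$i = (\<Sum>k<m. H$$(i,k) * y$k)" by (rule mv_expand'[OF H y i])
    also have "\<dots> = (\<Sum>k<m. G$$(i,k) * ya (f i) $ k)"
      by (intro sum.cong refl) (use G i in \<open>auto simp: H_def E_def ya_def\<close>)
    also have "\<dots> = (G *\<^sub>v ya (f i))$i" by (rule mv_expand'[OF G yac i, symmetric])
    finally show ?thesis .
  qed
  let ?I = "{..<m}" let ?T = "f ` {..<m}"
  have "(vnorm (H *\<^sub>v y))^2 = (\<Sum>i\<in>?I. (cmod ((H *\<^sub>v y)$i))^2)"
    using H by (simp add: vnorm_sq del: index_mult_mat_vec)
  also have "\<dots> = (\<Sum>i\<in>?I. (cmod ((G *\<^sub>v ya (f i))$i))^2)"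
    by (intro sum.cong refl) (simp add: Hy del: index_mult_mat_vec)
  also have "\<dots> = (\<Sum>a\<in>?T. \<Sum>i\<in>{i. i \<in> ?I \<and> f i = a}. (cmod ((G *\<^sub>v ya (f i))$i))^2)"
    by (rule sum.group[symmetric]) auto
  also have "\<dots> = (\<Sum>a\<in>?T. \<Sum>i\<in>{i. i \<in> ?I \<and> f i = a}. (cmod ((G *\<^sub>v ya a)$i))^2)"
    by (intro sum.cong refl) auto
  also have "\<dots> \<le> (\<Sum>a\<in>?T. \<Sum>i\<in>?I. (cmod ((G *\<^sub>v ya a)$i))^2)"
    by (intro sum_mono sum_mono2) auto
  also have "\<dots> = (\<Sum>a\<in>?T. (vnorm (G *\<^sub>v ya a))^2)"
    using G yac by (simp add: vnorm_sq)
  also have "\<dots> \<le> (\<Sum>a\<in>?T. (C * vnorm (ya a))^2)"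
    by (intro sum_mono power_mono C yac vnorm_nonneg)
  also have "\<dots> = C^2 * (\<Sum>a\<in>?T. \<Sum>k\<in>?I. (cmod (ya a $ k))^2)"
    by (simp add: power_mult_distrib sum_distrib_left vnorm_sq ya_def)
  also have "\<dots> = C^2 * (\<Sum>a\<in>?T. \<Sum>k\<in>{k. k \<in> ?I \<and> f k = a}. (cmod (y $ k))^2)"
  proof -
    have "\<And>a. (\<Sum>k\<in>?I. (cmod (ya a $ k))^2) = (\<Sum>k\<in>?I. if f k = a then (cmod (y $ k))^2 else 0)"
      by (intro sum.cong refl) (auto simp: ya_def)
    also have "\<And>a. (\<Sum>k\<in>?I. if f k = a then (cmod (y $ k))^2 else 0) = (\<Sum>k\<in>{k. k \<in> ?I \<and> f k = a}. (cmod (y $ k))^2)"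
      subgoal for a using sum.inter_filter[of "{..<m}" "\<lambda>k. (cmod (y$k))^2" "\<lambda>k. f k = a", symmetric] by simp
      done
    finally show ?thesis by simp
  qed
  also have "\<dots> = C^2 * (\<Sum>k\<in>?I. (cmod (y $ k))^2)"
    by (subst sum.group) auto
  also have "\<dots> = (C * vnorm y)^2" using y by (simp add: vnorm_sq power_mult_distrib)
  finally have "(vnorm (H *\<^sub>v y))^2 \<le> (C * vnorm y)^2" .
  hence "vnorm (H *\<^sub>v y) \<le> C * vnorm y" by (rule power2_le_imp_le) (use C0 vnorm_nonneg in simp)
  thus ?thesis by (simp add: H_def E_def)
qed

lemma delta_bound:
  fixes G :: "complex mat" and f :: "nat \<Rightarrow> 'b"
  assumes G: "G \<in> carrier_mat m m" and C0: "C \<ge> 0"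
    and C: "\<And>z. z \<in> carrier_vec m \<Longrightarrow> vnorm (G *\<^sub>v z) \<le> C * vnorm z"
    and y: "y \<in> carrier_vec m"
  shows "vnorm (hadamard G (mat m m (\<lambda>(i,k). if f i = f k then 0 else 1)) *\<^sub>v y) \<le> 2 * C * vnorm y"
proof -
  let ?E = "mat m m (\<lambda>(i,k). if f i = f k then 1 else (0::complex))"
  let ?D = "mat m m (\<lambda>(i,k). if f i = f k then 0 else (1::complex))"
  have eq: "hadamard G ?D *\<^sub>v y = G *\<^sub>v y - hadamard G ?E *\<^sub>v y"
  proof (rule eq_vecI)
    fix i assume "i < dim_vec (G *\<^sub>v y - hadamard G ?E *\<^sub>v y)"
    hence i: "i < m" using G by simp
    have "(hadamard G ?D *\<^sub>v y) $ i = (\<Sum>k<m. hadamard G ?D $$ (i,k) * y$k)"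
      by (rule mv_expand'[OF _ y i]) (use G in simp)
    also have "\<dots> = (\<Sum>k<m. G $$ (i,k) * y$k - hadamard G ?E $$ (i,k) * y$k)"
      by (intro sum.cong refl) (use G i in auto)
    also have "\<dots> = (\<Sum>k<m. G $$ (i,k) * y$k) - (\<Sum>k<m. hadamard G ?E $$ (i,k) * y$k)"
      by (rule sum_subtractf)
    also have "\<dots> = (G *\<^sub>v y - hadamard G ?E *\<^sub>v y) $ i"
      using G y i by (simp add: mv_expand'[OF G y i] mv_expand'[OF hadamard_carrier[OF G] y i])
    finally show "(hadamard G ?D *\<^sub>v y) $ i = (G *\<^sub>v y - hadamard G ?E *\<^sub>v y) $ i" .
  qed (use G in simp)
  have "vnorm (hadamard G ?D *\<^sub>v y) \<le> vnorm (G *\<^sub>v y) + vnorm (hadamard G ?E *\<^sub>v y)"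
    unfolding eq by (rule vnorm_minus) (use G in simp)
  also have "\<dots> \<le> C * vnorm y + C * vnorm y"
    by (intro add_mono C y block_bound[OF G C0 C y])
  finally show ?thesis by simp
qed



lemma smult_mat_vec:
  fixes M :: "complex mat"
  assumes M: "M \<in> carrier_mat r c" and z: "z \<in> carrier_vec c"
  shows "(a \<cdot>\<^sub>m M) *\<^sub>v z = a \<cdot>\<^sub>v (M *\<^sub>v z)"
proof (rule eq_vecI)
  fix i assume "i < dim_vec (a \<cdot>\<^sub>v (M *\<^sub>v z))"
  hence i: "i < r" using M by simp
  have "((a \<cdot>\<^sub>m M) *\<^sub>v z) $ i = (\<Sum>j<c. (a \<cdot>\<^sub>m M) $$ (i,j) * z$j)"
    by (rule mv_expand'[OF _ z i]) (use M in simp)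
  also have "\<dots> = a * (\<Sum>j<c. M $$ (i,j) * z$j)"
    using M i by (simp add: sum_distrib_left mult.assoc)
  also have "\<dots> = (a \<cdot>\<^sub>v (M *\<^sub>v z)) $ i" using M i by (simp add: mv_expand'[OF M z i])
  finally show "((a \<cdot>\<^sub>m M) *\<^sub>v z) $ i = (a \<cdot>\<^sub>v (M *\<^sub>v z)) $ i" .
qed (use M in simp)

lemma vnorm_smult: "vnorm (a \<cdot>\<^sub>v (z :: complex vec)) = cmod a * vnorm z"
proof -
  have "(vnorm (a \<cdot>\<^sub>v z))^2 = (cmod a * vnorm z)^2"
    by (simp add: vnorm_sq power_mult_distrib norm_mult sum_distrib_left)
  thus ?thesis using vnorm_nonneg by (metis norm_ge_zero mult_nonneg_nonneg power2_eq_imp_eq)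
qed

lemma ON_conj: "ON m us \<Longrightarrow> ON m (map conjugate us)"
  unfolding ON_def
proof (intro conjI allI impI)
  assume on: "length us = m \<and> set us \<subseteq> carrier_vec m \<and> (\<forall>i<m. \<forall>j<m. us ! i \<bullet>c us ! j = (if i = j then 1 else 0))"
  show "length (map conjugate us) = m" using on by simp
  show "set (map conjugate us) \<subseteq> carrier_vec m" using on by auto
  fix i j assume i: "i < m" and j: "j < m"
  have "us!i \<in> carrier_vec m" "us!j \<in> carrier_vec m" using on i j by (auto intro: nth_mem[THEN subsetD[rotated]])
  hence d: "dim_vec (us!i) = m" "dim_vec (us!j) = m" by auto
  have "conjugate (us!i) \<bullet>c conjugate (us!j) = (\<Sum>x<m. conjugate (us!i) $ x * cnj (conjugate (us!j) $ x))"
    using sprodc_expand[of "conjugate (us!j)" "conjugate (us!i)"] d by simp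
  also have "\<dots> = (\<Sum>x<m. cnj ((us!i) $ x * cnj ((us!j) $ x)))"
    by (intro sum.cong refl) (use d in simp)
  also have "\<dots> = cnj (us!i \<bullet>c us!j)"
    using sprodc_expand[of "us!j" "us!i"] d by simp
  finally have "conjugate (us!i) \<bullet>c conjugate (us!j) = cnj (us!i \<bullet>c us!j)" .
  thus "map conjugate us ! i \<bullet>c map conjugate us ! j = (if i = j then 1 else 0)"
    using on i j by simp
qed

lemma dg_norm:
  fixes cs :: "complex list"
  assumes z: "z \<in> carrier_vec (length cs)" and c: "\<forall>k<length cs. cmod (cs!k) = 1"
  shows "vnorm (dg cs *\<^sub>v z) = vnorm z"
proof -
  have "(vnorm (dg cs *\<^sub>v z))^2 = (\<Sum>k<length cs. (cmod ((dg cs *\<^sub>v z)$k))^2)"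
    by (simp add: vnorm_sq del: index_mult_mat_vec)
  also have "\<dots> = (\<Sum>k<length cs. (cmod (z$k))^2)"
    by (intro sum.cong refl) (use z c in \<open>simp add: dg_mult_vec_idx norm_mult del: index_mult_mat_vec\<close>)
  also have "\<dots> = (vnorm z)^2" using z by (simp add: vnorm_sq)
  finally show ?thesis using vnorm_nonneg by (metis power2_eq_imp_eq)
qed

lemma gamma_exists:
  fixes A :: "complex mat"
  assumes A: "A \<in> carrier_mat m m" and h: "mat_adjoint A = A"
  shows "\<exists>\<Gamma>. \<Gamma> \<in> carrier_mat m m \<and> mat_adjoint \<Gamma> = \<Gamma> \<and>
     (\<forall>z\<in>carrier_vec m. vnorm (\<Gamma> *\<^sub>v z) \<le> 1/2 * vnorm z) \<and>
     (\<Sum>i<m. \<Sum>j<m. \<Gamma>$$(i,j) * A$$(i,j)) = complex_of_real (trace_norm A / 2)"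
proof -
  obtain us ls where on: "ON m us" and len: "length ls = m"
    and eig: "\<forall>k<m. A *\<^sub>v us!k = complex_of_real (ls!k) \<cdot>\<^sub>v us!k"
    using spectral_list[OF A h] by blast
  have tn: "trace_norm A = (\<Sum>k<m. \<bar>ls!k\<bar>)" by (rule trace_norm_eig[OF A h on len eig])
  have uslen: "length us = m" and usc: "\<And>k. k < m \<Longrightarrow> us!k \<in> carrier_vec m"
    and uso: "\<And>i j. i < m \<Longrightarrow> j < m \<Longrightarrow> us!i \<bullet>c us!j = (if i = j then 1 else 0)"
    using on unfolding ON_def by auto
  define sg where "sg = (\<lambda>x::real. if x \<ge> 0 then 1 else -1 :: real)"
  define cs where "cs = map (\<lambda>x. complex_of_real (sg x)) ls"
  define V where "V = mat_of_cols m (map conjugate us)"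
  define S where "S = dg cs"
  define \<Gamma> where "\<Gamma> = (1/2) \<cdot>\<^sub>m (V * S * mat_adjoint V)"
  note Vu = ON_unitary[OF ON_conj[OF on], folded V_def]
  have cslen: "length cs = m" using len by (simp add: cs_def)
  have S: "S \<in> carrier_mat m m" unfolding S_def using dg_carrier(1)[of cs] cslen by simp
  have VA: "mat_adjoint V \<in> carrier_mat m m" using Vu by simp
  have VS: "V * S \<in> carrier_mat m m" using Vu S by (metis mult_carrier_mat)
  have VSV: "V * S * mat_adjoint V \<in> carrier_mat m m" using VS VA by (metis mult_carrier_mat)
  have \<Gamma>c: "\<Gamma> \<in> carrier_mat m m" unfolding \<Gamma>_def using VSV by (metis smult_carrier_mat)
  have Vidx: "V $$ (i,k) = cnj ((us!k) $ i)" if "i < m" "k < m" for i k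
  proof -
    have "dim_vec (us!k) = m" using usc[OF that(2)] by simp
    thus ?thesis using that uslen by (simp add: V_def mat_of_cols_def)
  qed
  have \<Gamma>idx: "\<Gamma> $$ (i,j) = (1/2) * (\<Sum>k<m. cnj ((us!k)$i) * cs!k * (us!k)$j)" if i: "i < m" and j: "j < m" for i j
  proof -
    have "(V * S * mat_adjoint V) $$ (i,j) = (\<Sum>k<m. (V * S) $$ (i,k) * mat_adjoint V $$ (k,j))"
      by (rule mm_expand'[of _ m m _ m]) (use Vu S VA i j in auto)
    also have "\<dots> = (\<Sum>k<m. cnj ((us!k)$i) * cs!k * (us!k)$j)"
    proof (intro sum.cong refl)
      fix k assume "k \<in> {..<m}"
      hence k: "k < m" by simp
      have "(V * S) $$ (i,k) = V $$ (i,k) * cs!k"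
        unfolding S_def by (rule mult_dg_idx) (use Vu cslen i k in auto)
      moreover have "mat_adjoint V $$ (k,j) = (us!k) $ j" using Vu i j k by (simp add: Vidx)
      ultimately show "(V * S) $$ (i,k) * mat_adjoint V $$ (k,j) = cnj ((us!k)$i) * cs!k * (us!k)$j"
        using i k by (simp add: Vidx)
    qed
    finally have X: "(V * S * mat_adjoint V) $$ (i,j) = (\<Sum>k<m. cnj ((us!k)$i) * cs!k * (us!k)$j)" .
    have "\<Gamma> $$ (i,j) = (1/2) * (V * S * mat_adjoint V) $$ (i,j)"
      unfolding \<Gamma>_def using VSV i j by (simp del: index_mult_mat)
    thus ?thesis unfolding X .
  qed
  have csreal: "\<And>k. k < m \<Longrightarrow> cnj (cs!k) = cs!k" using len by (simp add: cs_def)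
  have herm: "mat_adjoint \<Gamma> = \<Gamma>"
  proof (rule eq_matI)
    fix i j assume "i < dim_row \<Gamma>" "j < dim_col \<Gamma>"
    hence i: "i < m" and j: "j < m" using \<Gamma>c by auto
    have "mat_adjoint \<Gamma> $$ (i,j) = cnj (\<Gamma> $$ (j,i))" using \<Gamma>c i j by simp
    also have "\<dots> = (1/2) * (\<Sum>k<m. cnj ((us!k)$i) * cs!k * (us!k)$j)"
      using i j by (simp add: \<Gamma>idx csreal mult_ac)
    also have "\<dots> = \<Gamma> $$ (i,j)" using i j by (simp add: \<Gamma>idx)
    finally show "mat_adjoint \<Gamma> $$ (i,j) = \<Gamma> $$ (i,j)" .
  qed (use \<Gamma>c in auto)
  have nrm: "vnorm (\<Gamma> *\<^sub>v z) \<le> 1/2 * vnorm z" if z: "z \<in> carrier_vec m" for z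
  proof -
    have VV: "mat_adjoint (mat_adjoint V) * mat_adjoint V = 1\<^sub>m m" using Vu by simp
    have "\<Gamma> *\<^sub>v z = (1/2) \<cdot>\<^sub>v ((V * S * mat_adjoint V) *\<^sub>v z)"
      unfolding \<Gamma>_def by (rule smult_mat_vec) (use Vu S VA z in auto)
    also have "(V * S * mat_adjoint V) *\<^sub>v z = V *\<^sub>v (S *\<^sub>v (mat_adjoint V *\<^sub>v z))"
    proof -
      have w: "mat_adjoint V *\<^sub>v z \<in> carrier_vec m" using VA z by simp
      have "(V * S * mat_adjoint V) *\<^sub>v z = (V * S) *\<^sub>v (mat_adjoint V *\<^sub>v z)"
        by (rule assoc_mult_mat_vec[OF VS VA z])
      also have "\<dots> = V *\<^sub>v (S *\<^sub>v (mat_adjoint V *\<^sub>v z))"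
        by (rule assoc_mult_mat_vec[OF Vu(3) S w])
      finally show ?thesis .
    qed
    finally have e: "\<Gamma> *\<^sub>v z = (1/2) \<cdot>\<^sub>v (V *\<^sub>v (S *\<^sub>v (mat_adjoint V *\<^sub>v z)))" .
    have "vnorm (\<Gamma> *\<^sub>v z) = 1/2 * vnorm (V *\<^sub>v (S *\<^sub>v (mat_adjoint V *\<^sub>v z)))"
      unfolding e vnorm_smult by simp
    also have "vnorm (V *\<^sub>v (S *\<^sub>v (mat_adjoint V *\<^sub>v z))) = vnorm (S *\<^sub>v (mat_adjoint V *\<^sub>v z))"
      by (rule unitary_norm[OF Vu(3) Vu(1)]) (use S VA z in auto)
    also have "\<dots> = vnorm (mat_adjoint V *\<^sub>v z)"
      unfolding S_def by (rule dg_norm) (use VA z cslen in \<open>auto simp: cs_def sg_def\<close>)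
    also have "\<dots> = vnorm z" by (rule unitary_norm[OF VA VV z])
    finally show ?thesis by simp
  qed
  have val: "(\<Sum>i<m. \<Sum>j<m. \<Gamma>$$(i,j) * A$$(i,j)) = complex_of_real (trace_norm A / 2)"
  proof -
    define g where "g = (\<lambda>k i j. cnj ((us!k)$i) * cs!k * (us!k)$j * A$$(i,j))"
    have "(\<Sum>i<m. \<Sum>j<m. \<Gamma>$$(i,j) * A$$(i,j)) = (\<Sum>i<m. \<Sum>j<m. (1/2) * (\<Sum>k<m. g k i j))"
      by (intro sum.cong refl) (simp add: \<Gamma>idx g_def sum_distrib_right)
    also have "\<dots> = (1/2) * (\<Sum>i<m. \<Sum>j<m. \<Sum>k<m. g k i j)" by (simp add: sum_distrib_left)
    also have "(\<Sum>i<m. \<Sum>j<m. \<Sum>k<m. g k i j) = (\<Sum>i<m. \<Sum>k<m. \<Sum>j<m. g k i j)"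
      by (intro sum.cong refl sum.swap)
    also have "\<dots> = (\<Sum>k<m. \<Sum>i<m. \<Sum>j<m. g k i j)" by (rule sum.swap)
    also have "\<dots> = (\<Sum>k<m. complex_of_real (sg (ls!k) * ls!k))"
    proof (intro sum.cong refl)
      fix k assume "k \<in> {..<m}"
      hence k: "k < m" by simp
      have "(\<Sum>i<m. \<Sum>j<m. g k i j) = (\<Sum>i<m. cs!k * cnj ((us!k)$i) * (A *\<^sub>v us!k)$i)"
      proof (intro sum.cong refl)
        fix i assume "i \<in> {..<m}"
        hence i: "i < m" by simp
        have "(A *\<^sub>v us!k)$i = (\<Sum>j<m. A$$(i,j) * (us!k)$j)" by (rule mv_expand'[OF A usc[OF k] i])
        thus "(\<Sum>j<m. g k i j) = cs!k * cnj ((us!k)$i) * (A *\<^sub>v us!k)$i"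
          by (simp add: g_def sum_distrib_left mult_ac)
      qed
      also have "\<dots> = (\<Sum>i<m. cs!k * complex_of_real (ls!k) * ((us!k)$i * cnj ((us!k)$i)))"
        by (intro sum.cong refl) (use eig k usc[OF k] in \<open>simp add: mult_ac\<close>)
      also have "\<dots> = cs!k * complex_of_real (ls!k) * (us!k \<bullet>c us!k)"
        using usc[OF k] by (simp add: sprodc_expand sum_distrib_left)
      also have "\<dots> = complex_of_real (sg (ls!k) * ls!k)" using uso[OF k k] k len by (simp add: cs_def)
      finally show "(\<Sum>i<m. \<Sum>j<m. g k i j) = complex_of_real (sg (ls!k) * ls!k)" .
    qed
    also have "\<dots> = complex_of_real (\<Sum>k<m. \<bar>ls!k\<bar>)"
    proof -
      have p: "\<And>x. sg x * x = \<bar>x\<bar>" by (simp add: sg_def)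
      show ?thesis by (simp only: p of_real_sum)
    qed
    finally show ?thesis unfolding tn by simp
  qed
  show ?thesis using \<Gamma>c herm nrm val by blast
qed



lemma gram_facts:
  assumes g: "gram_unit \<rho>" and r: "\<rho> \<in> carrier_mat m m"
  shows "mat_adjoint \<rho> = \<rho>" "\<And>i. i < m \<Longrightarrow> \<rho> $$ (i,i) = 1"
    "\<And>i j. i < m \<Longrightarrow> j < m \<Longrightarrow> cmod (\<rho> $$ (i,j)) \<le> 1"
proof -
  obtain d vs where len: "length vs = dim_row \<rho>" and vsc: "\<forall>v\<in>set vs. v \<in> carrier_vec d \<and> vnorm v = 1"
    and eq: "\<rho> = mat (length vs) (length vs) (\<lambda>(i,j). (vs ! j) \<bullet>c (vs ! i))"
    using g unfolding gram_unit_def by blast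
  have lm: "length vs = m" using len r by simp
  have vi: "\<And>i. i < m \<Longrightarrow> vs!i \<in> carrier_vec d \<and> vnorm (vs!i) = 1" using vsc lm by auto
  have idx: "\<And>i j. i < m \<Longrightarrow> j < m \<Longrightarrow> \<rho> $$ (i,j) = vs!j \<bullet>c vs!i" using lm by (subst eq) simp
  show "mat_adjoint \<rho> = \<rho>"
  proof (rule eq_matI)
    fix i j assume "i < dim_row \<rho>" "j < dim_col \<rho>"
    hence i: "i < m" and j: "j < m" using r by auto
    have "mat_adjoint \<rho> $$ (i,j) = cnj (vs!i \<bullet>c vs!j)" using r i j by (simp add: idx)
    also have "\<dots> = vs!j \<bullet>c vs!i" by (rule sprodc_conj) (use vi[OF i] vi[OF j] in auto)
    finally show "mat_adjoint \<rho> $$ (i,j) = \<rho> $$ (i,j)" using idx[OF i j] by simp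
  qed (use r in auto)
  show "\<And>i. i < m \<Longrightarrow> \<rho> $$ (i,i) = 1"
  proof -
    fix i assume i: "i < m"
    have "\<rho> $$ (i,i) = complex_of_real ((vnorm (vs!i))^2)" using idx[OF i i] vnorm_sprod by simp
    thus "\<rho> $$ (i,i) = 1" using vi[OF i] by simp
  qed
  show "\<And>i j. i < m \<Longrightarrow> j < m \<Longrightarrow> cmod (\<rho> $$ (i,j)) \<le> 1"
  proof -
    fix i j assume i: "i < m" and j: "j < m"
    have "cmod (vs!j \<bullet>c vs!i) \<le> vnorm (vs!j) * vnorm (vs!i)" by (rule cs_ineq) (use vi[OF i] vi[OF j] in auto)
    thus "cmod (\<rho> $$ (i,j)) \<le> 1" using idx[OF i j] vi[OF i] vi[OF j] by simp
  qed
qed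

lemma herm_entry: "A \<in> carrier_mat m m \<Longrightarrow> mat_adjoint A = A \<Longrightarrow> i < m \<Longrightarrow> j < m \<Longrightarrow>
  cnj (A $$ (j,i)) = A $$ (i,j)"
  by (metis adj_idx carrier_matD(1) carrier_matD(2))

lemma vnorm_conj: "vnorm (conjugate v) = vnorm (v :: complex vec)"
  unfolding vnorm_def by (intro arg_cong[where f = sqrt] sum.cong refl) auto

theorem proposition2p1:
  fixes xs :: "('a::finite) list list"
    and n :: nat
    and \<rho> \<sigma> :: "complex mat"
  assumes "n \<ge> 1"
    and "distinct xs" and "xs \<noteq> []"
    and "\<forall>x\<in>set xs. length x = n"
    and "\<rho> \<in> carrier_mat (length xs) (length xs)"
    and "\<sigma> \<in> carrier_mat (length xs) (length xs)"
    and "gram_unit \<rho>" and "gram_unit \<sigma>"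
  shows "hadamard_dist \<rho> \<sigma> \<le> adv_star xs n \<rho> \<sigma>"
proof -
  define m where "m = length xs"
  have m0: "m > 0" using assms(3) by (simp add: m_def)
  have r: "\<rho> \<in> carrier_mat m m" and s: "\<sigma> \<in> carrier_mat m m" using assms(5,6) by (auto simp: m_def)
  note gr = gram_facts[OF assms(7) r] and gs = gram_facts[OF assms(8) s]
  define N where "N = \<rho> - \<sigma>"
  have Nc: "N \<in> carrier_mat m m" using s unfolding N_def by (rule minus_carrier_mat)
  have Nidx: "\<And>i j. i < m \<Longrightarrow> j < m \<Longrightarrow> N $$ (i,j) = \<rho> $$ (i,j) - \<sigma> $$ (i,j)"
    using r s by (simp add: N_def)
  have Ndiag: "\<And>i. i < m \<Longrightarrow> N $$ (i,i) = 0" using gr(2) gs(2) Nidx by simp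
  have Nb: "\<And>i j. i < m \<Longrightarrow> j < m \<Longrightarrow> cmod (N $$ (i,j)) \<le> 2"
  proof -
    fix i j assume i: "i < m" and j: "j < m"
    have "cmod (N $$ (i,j)) \<le> cmod (\<rho> $$ (i,j)) + cmod (\<sigma> $$ (i,j))"
      unfolding Nidx[OF i j] by (rule norm_triangle_ineq4)
    thus "cmod (N $$ (i,j)) \<le> 2" using gr(3)[OF i j] gs(3)[OF i j] by simp
  qed
  have Dl: "Delta xs p = mat m m (\<lambda>(i,k). if (\<lambda>i. xs!i!p) i = (\<lambda>i. xs!i!p) k then 0 else 1)" for p
    unfolding Delta_def m_def by simp
  define advS where "advS = {op_norm (hadamard \<Gamma> (\<rho> - \<sigma>)) | \<Gamma>.
      \<Gamma> \<in> carrier_mat (length xs) (length xs) \<and> mat_adjoint \<Gamma> = \<Gamma> \<and>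
      (\<forall>j<n. op_norm (hadamard \<Gamma> (Delta xs j)) \<le> 1)}"
  have adv: "adv_star xs n \<rho> \<sigma> = Sup advS" unfolding adv_star_def advS_def ..
  have bdd: "bdd_above advS"
  proof (rule bdd_aboveI[of _ "2 * real m"])
    fix t assume "t \<in> advS"
    then obtain \<Gamma> where t: "t = op_norm (hadamard \<Gamma> N)" and \<Gamma>: "\<Gamma> \<in> carrier_mat m m"
      and feas: "\<forall>j<n. op_norm (hadamard \<Gamma> (Delta xs j)) \<le> 1"
      unfolding advS_def N_def m_def by blast
    have HN: "hadamard \<Gamma> N \<in> carrier_mat m m" using \<Gamma> by simp
    have eb: "cmod (hadamard \<Gamma> N $$ (i,j)) \<le> 2" if i: "i < m" and j: "j < m" for i j
    proof (cases "i = j")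
      case True
      then show ?thesis using \<Gamma> i Ndiag by simp
    next
      case False
      have "xs!i \<noteq> xs!j" using False assms(2) i j by (simp add: m_def nth_eq_iff_index_eq)
      moreover have "length (xs!i) = n" "length (xs!j) = n" using assms(4) i j by (auto simp: m_def)
      ultimately obtain p where p: "p < n" "xs!i!p \<noteq> xs!j!p" by (metis nth_equalityI)
      have "hadamard \<Gamma> (Delta xs p) $$ (i,j) = \<Gamma> $$ (i,j)" using \<Gamma> i j p by (simp add: Dl)
      moreover have "cmod (hadamard \<Gamma> (Delta xs p) $$ (i,j)) \<le> op_norm (hadamard \<Gamma> (Delta xs p))"
        by (rule entry_le_op_norm[of _ m m]) (use \<Gamma> i j in auto)
      ultimately have "cmod (\<Gamma> $$ (i,j)) \<le> 1" using feas p by auto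
      hence "cmod (\<Gamma> $$ (i,j)) * cmod (N $$ (i,j)) \<le> 1 * 2"
        by (intro mult_mono Nb i j) auto
      thus ?thesis using \<Gamma> i j by (simp add: norm_mult)
    qed
    have fb: "frob (hadamard \<Gamma> N) \<le> 2 * real m"
    proof -
      have "(\<Sum>i<m. \<Sum>j<m. (cmod (hadamard \<Gamma> N $$ (i,j)))^2) \<le> (\<Sum>i<m. \<Sum>j<m. (2::real)^2)"
        by (intro sum_mono power_mono eb) auto
      also have "\<dots> = (2 * real m)^2" by (simp add: power2_eq_square)
      finally have "(\<Sum>i<m. \<Sum>j<m. (cmod (hadamard \<Gamma> N $$ (i,j)))^2) \<le> (2 * real m)^2" .
      hence "sqrt (\<Sum>i<m. \<Sum>j<m. (cmod (hadamard \<Gamma> N $$ (i,j)))^2) \<le> sqrt ((2 * real m)^2)"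
        by (rule real_sqrt_le_mono)
      moreover have "sqrt ((2 * real m)^2) = 2 * real m" by (rule real_sqrt_unique) auto
      ultimately have "sqrt (\<Sum>i<m. \<Sum>j<m. (cmod (hadamard \<Gamma> N $$ (i,j)))^2) \<le> 2 * real m"
        by linarith
      thus ?thesis unfolding frob_def using carrier_matD[OF HN] by (simp only:)
    qed
    have "op_norm (hadamard \<Gamma> N) \<le> 2 * real m"
    proof (rule op_norm_le[OF HN m0])
      fix v :: "complex vec" assume v: "v \<in> carrier_vec m" "vnorm v = 1"
      have "vnorm (hadamard \<Gamma> N *\<^sub>v v) \<le> frob (hadamard \<Gamma> N) * vnorm v" by (rule frob_bound[OF HN v(1)])
      thus "vnorm (hadamard \<Gamma> N *\<^sub>v v) \<le> 2 * real m" using fb v(2) by simp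
    qed
    thus "t \<le> 2 * real m" using t by simp
  qed
  have each: "trace_dist (hadamard \<rho> (outer_self u)) (hadamard \<sigma> (outer_self u)) \<le> Sup advS"
    if u: "u \<in> carrier_vec m" and u1: "vnorm u = 1" for u
  proof -
    define A where "A = hadamard \<rho> (outer_self u) - hadamard \<sigma> (outer_self u)"
    have Ac: "A \<in> carrier_mat m m" unfolding A_def by (rule minus_carrier_mat) (use s in simp)
    have Aidx: "A $$ (i,j) = N $$ (i,j) * (u$i * cnj (u$j))" if i: "i < m" and j: "j < m" for i j
      using r s u i j by (simp add: A_def Nidx outer_self_def algebra_simps)
    have Ah: "mat_adjoint A = A"
    proof (rule eq_matI)
      fix i j assume "i < dim_row A" "j < dim_col A"
      hence i: "i < m" and j: "j < m" using Ac by auto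
      have "mat_adjoint N = N" using gr(1) gs(1) r s unfolding N_def
        by (intro eq_matI) (auto simp: Nidx herm_entry[OF r gr(1)] herm_entry[OF s gs(1)])
      hence "cnj (N $$ (j,i)) = N $$ (i,j)" using Nc i j by (simp add: herm_entry)
      thus "mat_adjoint A $$ (i,j) = A $$ (i,j)" using Ac i j by (simp add: Aidx mult_ac)
    qed (use Ac in auto)
    obtain \<Gamma> where \<Gamma>: "\<Gamma> \<in> carrier_mat m m" and \<Gamma>h: "mat_adjoint \<Gamma> = \<Gamma>"
      and \<Gamma>n: "\<forall>z\<in>carrier_vec m. vnorm (\<Gamma> *\<^sub>v z) \<le> 1/2 * vnorm z"
      and \<Gamma>v: "(\<Sum>i<m. \<Sum>j<m. \<Gamma>$$(i,j) * A$$(i,j)) = complex_of_real (trace_norm A / 2)"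
      using gamma_exists[OF Ac Ah] by blast
    have feas: "op_norm (hadamard \<Gamma> (Delta xs j)) \<le> 1" for j
    proof (rule op_norm_le[of _ m m])
      show "hadamard \<Gamma> (Delta xs j) \<in> carrier_mat m m" using \<Gamma> by simp
      fix v :: "complex vec" assume v: "v \<in> carrier_vec m" "vnorm v = 1"
      have "vnorm (hadamard \<Gamma> (Delta xs j) *\<^sub>v v) \<le> 2 * (1/2) * vnorm v"
        unfolding Dl by (rule delta_bound[OF \<Gamma> _ _ v(1)]) (use \<Gamma>n in auto)
      thus "vnorm (hadamard \<Gamma> (Delta xs j) *\<^sub>v v) \<le> 1" using v by simp
    qed (use m0 in auto)
    have inS: "op_norm (hadamard \<Gamma> N) \<in> advS"
      unfolding advS_def N_def using \<Gamma> \<Gamma>h feas by (auto simp: m_def)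
    define x where "x = conjugate u"
    have xc: "x \<in> carrier_vec m" using u by (simp add: x_def)
    have x1: "vnorm x = 1" using u1 by (simp add: x_def vnorm_conj)
    have HN: "hadamard \<Gamma> N \<in> carrier_mat m m" using \<Gamma> by simp
    have "(hadamard \<Gamma> N *\<^sub>v x) \<bullet>c x = (\<Sum>i<m. (hadamard \<Gamma> N *\<^sub>v x) $ i * cnj (x $ i))"
      using sprodc_expand[of x "hadamard \<Gamma> N *\<^sub>v x"] HN xc carrier_matD[OF \<Gamma>] by (simp del: index_mult_mat_vec)
    also have "\<dots> = (\<Sum>i<m. \<Sum>j<m. \<Gamma>$$(i,j) * A$$(i,j))"
    proof (intro sum.cong refl)
      fix i assume "i \<in> {..<m}"
      hence i: "i < m" by simp
      have "(hadamard \<Gamma> N *\<^sub>v x) $ i = (\<Sum>j<m. hadamard \<Gamma> N $$ (i,j) * x $ j)"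
        by (rule mv_expand'[OF HN xc i])
      also have "\<dots> = (\<Sum>j<m. \<Gamma>$$(i,j) * N $$ (i,j) * cnj (u $ j))"
        by (intro sum.cong refl) (use \<Gamma> i u in \<open>auto simp: x_def\<close>)
      finally have e: "(hadamard \<Gamma> N *\<^sub>v x) $ i = (\<Sum>j<m. \<Gamma>$$(i,j) * N $$ (i,j) * cnj (u $ j))" .
      have xi: "cnj (x $ i) = u $ i" using u i by (simp add: x_def)
      show "(hadamard \<Gamma> N *\<^sub>v x) $ i * cnj (x $ i) = (\<Sum>j<m. \<Gamma>$$(i,j) * A$$(i,j))"
        unfolding e xi by (simp add: sum_distrib_right sum_distrib_left Aidx i mult_ac)
    qed
    also have "\<dots> = complex_of_real (trace_norm A / 2)" by (rule \<Gamma>v)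
    finally have eqv: "(hadamard \<Gamma> N *\<^sub>v x) \<bullet>c x = complex_of_real (trace_norm A / 2)" .
    have "trace_dist (hadamard \<rho> (outer_self u)) (hadamard \<sigma> (outer_self u)) = trace_norm A / 2"
      by (simp add: trace_dist_def A_def)
    also have "\<dots> \<le> cmod ((hadamard \<Gamma> N *\<^sub>v x) \<bullet>c x)" unfolding eqv by simp
    also have "\<dots> \<le> vnorm (hadamard \<Gamma> N *\<^sub>v x) * vnorm x" by (rule cs_ineq) (use HN xc carrier_matD[OF \<Gamma>] in simp)
    also have "\<dots> = vnorm (hadamard \<Gamma> N *\<^sub>v x)" using x1 by simp
    also have "\<dots> \<le> op_norm (hadamard \<Gamma> N)" by (rule op_norm_ge[OF HN xc x1])
    also have "\<dots> \<le> Sup advS" by (rule cSup_upper[OF inS bdd])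
    finally show ?thesis .
  qed
  have "hadamard_dist \<rho> \<sigma> \<le> Sup advS"
    unfolding hadamard_dist_def
  proof (rule cSup_least)
    show "{trace_dist (hadamard \<rho> (outer_self u)) (hadamard \<sigma> (outer_self u)) | u.
        u \<in> carrier_vec (dim_row \<rho>) \<and> vnorm u = 1} \<noteq> {}"
      using vnorm_unit[OF m0] r by (auto intro!: exI[of _ "unit_vec m 0"])
  qed (use each r in auto)
  thus ?thesis unfolding adv .
qed


end
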